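(* Let $n=1$, $0<\alpha<1$, and on $\mathbb{R}$ let $d\sigma(y)=e^y\,dy$ and $d\omega(x)=\mathbf{1}_{[0,1]}(x)\,dx$. Then $A_2^\alpha(\sigma,\omega)=\infty$, while there is a constant $C=C(\alpha)<\infty$ such that $$\int_I|I_\alpha(\mathbf{1}_I\sigma)|^2\,d\omega\le C\,|3I|_\sigma\quad\text{for every bounded interval } I\subset\mathbb{R},$$ i.e. $\mathfrak{T}_{I_\alpha}(3)(\sigma,\omega)<\infty$.
   Context: On $\mathbb{R}$, $I_\alpha(f\mu)(x)=\int|x-y|^{\alpha-1}f(y)\,d\mu(y)$. For an interval $I$, $3I$ is the concentric interval of three times the length, $|I|_\mu=\mu(I)$. $A_2^\alpha(\sigma,\omega)=\sup_I\frac{|I|_\sigma|I|_\omega}{|I|^{2(1-\alpha)}}$ over intervals $I$. $\mathfrak{T}_{I_\alpha}(3)(\sigma,\omega)$ is the best constant $C$ in $\int_I|I_\alpha(\mathbf{1}_I\sigma)|^2d\omega\le C^2|3I|_\sigma$ over all intervals $I$. *)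

theory Defs
  imports "HOL-Analysis.Analysis"
begin

definition frac_int :: "real \<Rightarrow> real measure \<Rightarrow> real set \<Rightarrow> real \<Rightarrow> ennreal" where
  "frac_int \<alpha> \<mu> I x = (\<integral>\<^sup>+ y. indicator I y * ennreal (\<bar>x - y\<bar> powr (\<alpha> - 1)) \<partial>\<mu>)"

definition triple_interval :: "real \<Rightarrow> real \<Rightarrow> real set" where
  "triple_interval a b = {a - (b - a) .. b + (b - a)}"

definition A2_alpha :: "real \<Rightarrow> real measure \<Rightarrow> real measure \<Rightarrow> ennreal" where
  "A2_alpha \<alpha> \<sigma> \<omega> = (SUP p \<in> {p :: real \<times> real. fst p < snd p}.
      emeasure \<sigma> {fst p .. snd p} * emeasure \<omega> {fst p .. snd p}
        / ennreal ((snd p - fst p) powr (2 * (1 - \<alpha>))))"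

definition sigma_ex :: "real measure" where
  "sigma_ex = density lborel (\<lambda>y. ennreal (exp y))"

definition omega_ex :: "real measure" where
  "omega_ex = density lborel (indicator {0..1})"

end

theory Submission
  imports Defs
begin

lemma half_int:
  assumes "0 < \<alpha>"
  shows "(\<integral>\<^sup>+ s. ennreal (\<bar>s\<bar> powr (\<alpha> - 1)) * indicator {0..1} s \<partial>lborel) = ennreal (1/\<alpha>)"
proof -
  have "((\<lambda>s. s powr (\<alpha> - 1)) has_integral (1 powr (\<alpha> - 1 + 1) / (\<alpha> - 1 + 1))) {0..1}"
    by (rule has_integral_powr_from_0) (use assms in auto)
  then have h: "((\<lambda>s. s powr (\<alpha> - 1)) has_integral (1/\<alpha>)) {0..1}" by simp
  have "(\<integral>\<^sup>+ s. ennreal (s powr (\<alpha> - 1)) * indicator {0..1} s \<partial>lborel) = ennreal (1/\<alpha>)"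
    by (rule nn_integral_has_integral_lebesgue'[OF _ h]) auto
  moreover have "(\<integral>\<^sup>+ s. ennreal (\<bar>s\<bar> powr (\<alpha> - 1)) * indicator {0..1} s \<partial>lborel)
     = (\<integral>\<^sup>+ s. ennreal (s powr (\<alpha> - 1)) * indicator {0..1} s \<partial>lborel)"
    by (rule nn_integral_cong) (auto split: split_indicator)
  ultimately show ?thesis by simp
qed

lemma near_int:
  assumes "0 < \<alpha>"
  shows "(\<integral>\<^sup>+ y. indicator {x-1..x+1} y * ennreal (\<bar>x - y\<bar> powr (\<alpha> - 1)) \<partial>lborel) \<le> ennreal (2/\<alpha>)"
proof -
  let ?f = "\<lambda>y. ennreal (\<bar>x - y\<bar> powr (\<alpha> - 1))"
  have m: "?f \<in> borel_measurable borel" by measurable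
  have r: "(\<integral>\<^sup>+ y. ?f y * indicator {x..x+1} y \<partial>lborel) = ennreal (1/\<alpha>)"
  proof -
    have "(\<integral>\<^sup>+ y. ?f y * indicator {x..x+1} y \<partial>lborel) = (\<integral>\<^sup>+ s. ?f (x + 1 * s) * indicator {x..x+1} (x + 1 * s) \<partial>lborel)"
      using nn_integral_real_affine[where c=1 and t=x and f="\<lambda>y. ?f y * indicator {x..x+1} y"] m by simp
    also have "\<dots> = (\<integral>\<^sup>+ s. ennreal (\<bar>s\<bar> powr (\<alpha> - 1)) * indicator {0..1} s \<partial>lborel)"
      by (auto intro!: nn_integral_cong split: split_indicator)
    finally show ?thesis using half_int[OF assms] by simp
  qed
  have l: "(\<integral>\<^sup>+ y. ?f y * indicator {x-1..x} y \<partial>lborel) = ennreal (1/\<alpha>)"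
  proof -
    have "(\<integral>\<^sup>+ y. ?f y * indicator {x-1..x} y \<partial>lborel) = (\<integral>\<^sup>+ s. ?f (x + (-1) * s) * indicator {x-1..x} (x + (-1) * s) \<partial>lborel)"
      using nn_integral_real_affine[where c="-1" and t=x and f="\<lambda>y. ?f y * indicator {x-1..x} y"] m by simp
    also have "\<dots> = (\<integral>\<^sup>+ s. ennreal (\<bar>s\<bar> powr (\<alpha> - 1)) * indicator {0..1} s \<partial>lborel)"
      by (auto intro!: nn_integral_cong split: split_indicator)
    finally show ?thesis using half_int[OF assms] by simp
  qed
  have "(\<integral>\<^sup>+ y. indicator {x-1..x+1} y * ?f y \<partial>lborel)
      \<le> (\<integral>\<^sup>+ y. ?f y * indicator {x-1..x} y + ?f y * indicator {x..x+1} y \<partial>lborel)"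
    by (rule nn_integral_mono) (auto split: split_indicator)
  also have "\<dots> = (\<integral>\<^sup>+ y. ?f y * indicator {x-1..x} y \<partial>lborel) + (\<integral>\<^sup>+ y. ?f y * indicator {x..x+1} y \<partial>lborel)"
    by (rule nn_integral_add) (use m in auto)
  also have "\<dots> = ennreal (2/\<alpha>)" using l r assms by (simp add: ennreal_plus[symmetric] del: ennreal_plus)
  finally show ?thesis .
qed

lemma sigma_int: "a \<le> b \<Longrightarrow> emeasure sigma_ex {a..b} = ennreal (exp b - exp a)"
proof -
  assume ab: "a \<le> b"
  have h: "(exp has_integral (exp b - exp a)) {a..b}"
    by (rule fundamental_theorem_of_calculus) (use ab in \<open>auto intro!: derivative_eq_intros simp: has_real_derivative_iff_has_vector_derivative[symmetric]\<close>)
  have "emeasure sigma_ex {a..b} = (\<integral>\<^sup>+ y. ennreal (exp y) * indicator {a..b} y \<partial>lborel)"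
    unfolding sigma_ex_def by (rule emeasure_density) auto
  also have "\<dots> = ennreal (exp b - exp a)"
    by (rule nn_integral_has_integral_lebesgue'[OF _ h]) auto
  finally show ?thesis .
qed

lemma omega_int: "emeasure omega_ex S = emeasure lborel (S \<inter> {0..1})" if "S \<in> sets borel"
proof -
  have "emeasure omega_ex S = (\<integral>\<^sup>+ y. indicator {0..1} y * indicator S y \<partial>lborel)"
    unfolding omega_ex_def by (rule emeasure_density) (use that in auto)
  also have "\<dots> = (\<integral>\<^sup>+ y. indicator (S \<inter> {0..1}) y \<partial>lborel)"
    by (auto intro!: nn_integral_cong split: split_indicator)
  also have "\<dots> = emeasure lborel (S \<inter> {0..1})" using that by simp
  finally show ?thesis .
qed

lemma F_bound:
  assumes "0 < \<alpha>" "\<alpha> < 1" "a \<le> b"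
  shows "frac_int \<alpha> sigma_ex {a..b} x \<le> ennreal (exp b * (2/\<alpha> + 1))"
proof -
  let ?f = "\<lambda>y. ennreal (\<bar>x - y\<bar> powr (\<alpha> - 1))"
  have m: "?f \<in> borel_measurable borel" by measurable
  have "frac_int \<alpha> sigma_ex {a..b} x = (\<integral>\<^sup>+ y. ennreal (exp y) * (indicator {a..b} y * ?f y) \<partial>lborel)"
    unfolding frac_int_def sigma_ex_def by (rule nn_integral_density) (use m in auto)
  also have "\<dots> \<le> (\<integral>\<^sup>+ y. ennreal (exp b) * (indicator {x-1..x+1} y * ?f y) + ennreal (exp y) * indicator {a..b} y \<partial>lborel)"
  proof (rule nn_integral_mono)
    fix y
    show "ennreal (exp y) * (indicator {a..b} y * ?f y) \<le> ennreal (exp b) * (indicator {x-1..x+1} y * ?f y) + ennreal (exp y) * indicator {a..b} y"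
    proof (cases "y \<in> {a..b}")
      case False then show ?thesis by simp
    next
      case yab: True
      show ?thesis
      proof (cases "y \<in> {x-1..x+1}")
        case True
        have "ennreal (exp y) * (indicator {a..b} y * ?f y) \<le> ennreal (exp b) * (indicator {x-1..x+1} y * ?f y)"
          using yab True by (auto intro!: mult_right_mono)
        then show ?thesis by (rule order_trans) simp
      next
        case False
        then have "1 \<le> \<bar>x - y\<bar>" by auto
        then have "\<bar>x - y\<bar> powr (\<alpha> - 1) \<le> \<bar>x - y\<bar> powr 0" by (intro powr_mono) (use assms in auto)
        then have "\<bar>x - y\<bar> powr (\<alpha> - 1) \<le> 1" using \<open>1 \<le> \<bar>x - y\<bar>\<close> by (auto split: if_splits)
        then have "exp y * \<bar>x - y\<bar> powr (\<alpha> - 1) \<le> exp y" by (intro mult_left_le) auto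
        then have "ennreal (exp y) * ?f y \<le> ennreal (exp y)"
          by (simp add: ennreal_mult[symmetric] ennreal_leI)
        then have "ennreal (exp y) * (indicator {a..b} y * ?f y) \<le> ennreal (exp y) * indicator {a..b} y"
          using yab by auto
        then show ?thesis by (rule order_trans) simp
      qed
    qed
  qed
  also have "\<dots> = ennreal (exp b) * (\<integral>\<^sup>+ y. indicator {x-1..x+1} y * ?f y \<partial>lborel) + (\<integral>\<^sup>+ y. ennreal (exp y) * indicator {a..b} y \<partial>lborel)"
    by (subst nn_integral_add) (use m in \<open>auto simp: nn_integral_cmult\<close>)
  also have "(\<integral>\<^sup>+ y. ennreal (exp y) * indicator {a..b} y \<partial>lborel) = emeasure sigma_ex {a..b}"
    unfolding sigma_ex_def by (rule emeasure_density[symmetric]) auto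
  also have "\<dots> = ennreal (exp b - exp a)" using sigma_int assms by simp
  also have "ennreal (exp b) * (\<integral>\<^sup>+ y. indicator {x-1..x+1} y * ?f y \<partial>lborel) + ennreal (exp b - exp a)
      \<le> ennreal (exp b) * ennreal (2/\<alpha>) + ennreal (exp b - exp a)"
    by (intro add_right_mono mult_left_mono near_int assms) auto
  also have "\<dots> = ennreal (exp b * (2/\<alpha>) + (exp b - exp a))"
    using assms by (simp add: ennreal_mult[symmetric] ennreal_plus[symmetric] del: ennreal_plus)
  also have "\<dots> \<le> ennreal (exp b * (2/\<alpha> + 1))"
    by (intro ennreal_leI) (simp add: algebra_simps)
  finally show ?thesis .
qed

lemma key_real:
  fixes a b :: real
  assumes "a < b" "a \<le> 1"
  shows "exp b ^ 2 * min (b - a) 1 \<le> exp 4 * (exp (b + (b - a)) - exp (a - (b - a)))"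
proof -
  define L where "L = b - a"
  have L: "L > 0" using assms L_def by simp
  have e1: "exp b ^ 2 = exp (a - L) * exp (a + 3*L)"
    by (simp add: L_def power2_eq_square exp_add[symmetric])
  have e2: "exp (b + (b - a)) - exp (a - (b - a)) = exp (a - L) * (exp (3*L) - 1)"
    by (simp add: L_def algebra_simps exp_add[symmetric])
  have s: "exp (a + 3*L) * min L 1 \<le> exp 4 * (exp (3*L) - 1)"
  proof (cases "L < 1")
    case True
    have "exp (a + 3*L) \<le> exp 4" using True assms by simp
    moreover have "L \<le> exp (3*L) - 1" using exp_ge_add_one_self[of "3*L"] L by linarith
    ultimately have "exp (a + 3*L) * L \<le> exp 4 * (exp (3*L) - 1)"
      using L by (intro mult_mono) auto
    then show ?thesis using True by simp
  next
    case False
    have E: "exp (3*L) \<ge> 4" using exp_ge_add_one_self[of "3*L"] False by linarith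
    have "exp (a + 3*L) \<le> exp 1 * exp (3*L)" using assms by (simp add: exp_add[symmetric])
    also have "exp 1 \<le> exp (4::real) * (3/4)"
    proof -
      have "exp (4::real) = exp 1 * exp 3" by (simp add: exp_add[symmetric])
      moreover have "exp (3::real) \<ge> 4" using exp_ge_add_one_self[of 3] by simp
      ultimately show ?thesis by (simp add: mult.commute)
    qed
    also have "exp 4 * (3/4) * exp (3*L) \<le> exp 4 * (exp (3*L) - 1)"
    proof -
      have "exp 4 * 1 \<le> exp 4 * (exp (3*L) / 4)" using E by (intro mult_left_mono) auto
      then have "exp 4 \<le> (exp 4 * exp (3*L)) / 4" by simp
      moreover have "exp 4 * (3/4) * exp (3*L) = 3/4 * (exp 4 * exp (3*L))" by simp
      moreover have "exp 4 * (exp (3*L) - 1) = exp 4 * exp (3*L) - exp 4" by (simp add: right_diff_distrib)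
      ultimately show ?thesis by linarith
    qed
    finally show ?thesis using False by simp
  qed
  have "exp b ^ 2 * min (b - a) 1 = exp (a - L) * (exp (a + 3*L) * min L 1)" using e1 L_def by simp
  also have "\<dots> \<le> exp (a - L) * (exp 4 * (exp (3*L) - 1))" by (rule mult_left_mono[OF s]) simp
  also have "\<dots> = exp 4 * (exp (b + (b - a)) - exp (a - (b - a)))" unfolding e2 by simp
  finally show ?thesis .
qed

lemma part2:
  assumes "0 < \<alpha>" "\<alpha> < 1" "a < b"
  shows "(\<integral>\<^sup>+ x. indicator {a..b} x * (frac_int \<alpha> sigma_ex {a..b} x)\<^sup>2 \<partial>omega_ex)
            \<le> ennreal ((2/\<alpha> + 1)^2 * exp 4) * emeasure sigma_ex (triple_interval a b)"
proof -
  define M where "M = exp b * (2/\<alpha> + 1)"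
  have M0: "0 \<le> M" using assms by (simp add: M_def)
  have "(\<integral>\<^sup>+ x. indicator {a..b} x * (frac_int \<alpha> sigma_ex {a..b} x)\<^sup>2 \<partial>omega_ex)
      \<le> (\<integral>\<^sup>+ x. ennreal (M^2) * indicator {a..b} x \<partial>omega_ex)"
  proof (rule nn_integral_mono)
    fix x
    have "(frac_int \<alpha> sigma_ex {a..b} x)\<^sup>2 \<le> (ennreal M)\<^sup>2"
      using F_bound[of \<alpha> a b x] assms unfolding M_def by (intro power_mono) auto
    also have "\<dots> = ennreal (M^2)" using M0 by (simp add: ennreal_power)
    finally show "indicator {a..b} x * (frac_int \<alpha> sigma_ex {a..b} x)\<^sup>2 \<le> ennreal (M^2) * indicator {a..b} x"
      by (auto split: split_indicator)
  qed
  also have "\<dots> = ennreal (M^2) * emeasure omega_ex {a..b}"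
    by (rule nn_integral_cmult_indicator) (simp add: omega_ex_def)
  also have "emeasure omega_ex {a..b} = emeasure lborel ({a..b} \<inter> {0..1})"
    by (rule omega_int) simp
  finally have L1: "(\<integral>\<^sup>+ x. indicator {a..b} x * (frac_int \<alpha> sigma_ex {a..b} x)\<^sup>2 \<partial>omega_ex)
      \<le> ennreal (M^2) * emeasure lborel ({a..b} \<inter> {0..1})" .
  have sig: "emeasure sigma_ex (triple_interval a b) = ennreal (exp (b + (b - a)) - exp (a - (b - a)))"
    unfolding triple_interval_def using assms by (intro sigma_int) auto
  show ?thesis
  proof (cases "1 < a \<or> b < 0")
    case True
    then have "{a..b} \<inter> {0..1::real} = {}" by auto
    then show ?thesis using L1 by simp
  next
    case False
    then have "{a..b} \<inter> {0..1::real} = {max a 0..min b 1}" by auto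
    moreover have "max a 0 \<le> min b 1" using False assms by auto
    ultimately have "emeasure lborel ({a..b} \<inter> {0..1}) = ennreal (min b 1 - max a 0)" by simp
    also have "\<dots> \<le> ennreal (min (b - a) 1)" by (intro ennreal_leI) auto
    finally have w: "emeasure lborel ({a..b} \<inter> {0..1}) \<le> ennreal (min (b - a) 1)" .
    have "ennreal (M^2) * emeasure lborel ({a..b} \<inter> {0..1}) \<le> ennreal (M^2) * ennreal (min (b - a) 1)"
      by (rule mult_left_mono[OF w]) simp
    also have "\<dots> = ennreal (M^2 * min (b - a) 1)" by (rule ennreal_mult[symmetric]) (use assms in auto)
    also have "\<dots> \<le> ennreal ((2/\<alpha> + 1)^2 * exp 4 * (exp (b + (b - a)) - exp (a - (b - a))))"
    proof (intro ennreal_leI)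
      have "M^2 * min (b - a) 1 = (2/\<alpha> + 1)^2 * (exp b ^ 2 * min (b - a) 1)"
        by (simp add: M_def power_mult_distrib)
      also have "\<dots> \<le> (2/\<alpha> + 1)^2 * (exp 4 * (exp (b + (b - a)) - exp (a - (b - a))))"
        using key_real[of a b] False assms by (intro mult_left_mono) auto
      finally show "M^2 * min (b - a) 1 \<le> (2/\<alpha> + 1)^2 * exp 4 * (exp (b + (b - a)) - exp (a - (b - a)))"
        by (simp add: mult.assoc)
    qed
    also have "\<dots> = ennreal ((2/\<alpha> + 1)^2 * exp 4) * emeasure sigma_ex (triple_interval a b)"
      unfolding sig using assms by (simp add: ennreal_mult)
    finally show ?thesis using L1 by (rule order_trans[rotated])
  qed
qed

lemma part1:
  assumes "0 < \<alpha>" "\<alpha> < 1"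
  shows "A2_alpha \<alpha> sigma_ex omega_ex = \<infinity>"
  unfolding A2_alpha_def infinity_ennreal_def SUP_eq_top_iff
proof (intro allI impI)
  fix x :: ennreal assume "x < top"
  then obtain r where r: "x = ennreal r" "0 \<le> r" by (cases x) auto
  define B where "B = max 2 (27 * (r + 1))"
  have B1: "1 \<le> B" by (simp add: B_def)
  have s: "emeasure sigma_ex {0..B} = ennreal (exp B - 1)" using sigma_int[of 0 B] B1 by simp
  have "emeasure omega_ex {0..B} = emeasure lborel ({0..B} \<inter> {0..1})" by (rule omega_int) simp
  also have "{0..B} \<inter> {0..1::real} = {0..1}" using B1 by auto
  finally have w: "emeasure omega_ex {0..B} = 1" by simp
  have Bp: "B powr (2 * (1 - \<alpha>)) \<le> B^2"
  proof -
    have "B powr (2 * (1 - \<alpha>)) \<le> B powr 2" using assms B1 by (intro powr_mono) auto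
    then show ?thesis using B1 by (simp add: powr_realpow)
  qed
  have Bpos: "0 < B powr (2 * (1 - \<alpha>))" using B1 by simp
  have e: "exp B - 1 \<ge> B^3 / 27"
  proof -
    have "exp B = exp (B/3) ^ 3" by (simp add: exp_of_nat_mult[symmetric])
    moreover have "1 + B/3 \<le> exp (B/3)" by (rule exp_ge_add_one_self)
    ultimately have "(1 + B/3)^3 \<le> exp B" using B1 by (metis power_mono add_nonneg_nonneg divide_nonneg_nonneg zero_le_one zero_le_numeral order_trans[OF zero_le_one B1])
    moreover have "(1 + B/3)^3 \<ge> 1 + B^3/27"
    proof -
      have "(1 + B/3)^3 = 1 + B + B^2/3 + B^3/27" by (simp add: power3_eq_cube power2_eq_square field_simps)
      moreover have "0 \<le> B^2" by simp
      ultimately show ?thesis using B1 by linarith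
    qed
    ultimately show ?thesis by linarith
  qed
  have "r < B / 27" unfolding B_def by auto
  also have "B / 27 = (B^3/27) / B^2" using B1 by (simp add: power2_eq_square power3_eq_cube)
  also have "\<dots> \<le> (exp B - 1) / B^2" using B1 e by (intro divide_right_mono) auto
  also have "\<dots> \<le> (exp B - 1) / B powr (2 * (1 - \<alpha>))"
    using e Bp Bpos B1 by (intro divide_left_mono) (auto intro: order_trans[rotated])
  finally have rr: "r < (exp B - 1) / B powr (2 * (1 - \<alpha>))" .
  show "\<exists>p\<in>{p. fst p < snd p}. x < emeasure sigma_ex {fst p..snd p} * emeasure omega_ex {fst p..snd p} /
              ennreal ((snd p - fst p) powr (2 * (1 - \<alpha>)))"
  proof (rule bexI[of _ "(0, B)"])
    have "exp B - 1 \<ge> 0" using B1 by simp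
    then have "emeasure sigma_ex {0..B} * emeasure omega_ex {0..B} / ennreal (B powr (2 * (1 - \<alpha>)))
       = ennreal ((exp B - 1) / B powr (2 * (1 - \<alpha>)))"
      unfolding s w using Bpos by (simp add: divide_ennreal)
    then show "x < emeasure sigma_ex {fst (0, B)..snd (0, B)} * emeasure omega_ex {fst (0, B)..snd (0, B)} /
              ennreal ((snd (0, B) - fst (0, B)) powr (2 * (1 - \<alpha>)))"
      using rr r by (simp add: ennreal_lessI)
  qed (use B1 in simp)
qed

theorem mainTheorem5:
  fixes \<alpha> :: real
  assumes "0 < \<alpha>" and "\<alpha> < 1"
  shows "A2_alpha \<alpha> sigma_ex omega_ex = \<infinity>
    \<and> (\<exists>C :: real. \<forall>a b :: real. a < b \<longrightarrow>
          (\<integral>\<^sup>+ x. indicator {a..b} x * (frac_int \<alpha> sigma_ex {a..b} x)\<^sup>2 \<partial>omega_ex)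
            \<le> ennreal C * emeasure sigma_ex (triple_interval a b))"
  using part1[OF assms] part2[OF assms] by blast

end
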